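(* Let $E$ be a finite set and $V \subset \mathbb R^E$ a linear subspace defining an oriented matroid $M$. If $F$ is an acyclic flat of $M$, then \[ \mathcal Y_V \cap \big(0^F \times (\mathbb P^1_{\mathbb R})^{E \setminus F}\big) = \mathcal Y_{V \cap \ker(\pi_F)}. \]
   Context: $\mathbb P^1_{\mathbb R} = \mathbb R\cup\{\infty\}$. For a linear subspace $W \subset \mathbb R^E$, $\mathcal Y_W$ denotes the closure of $W \cap \mathbb R_{\geq 0}^E$ in $(\mathbb P^1_{\mathbb R})^E$ in the analytic topology. $\pi_F : \mathbb R^E \to \mathbb R^F$ is the coordinate projection, so $V\cap \ker(\pi_F)$ is the subspace of vectors of $V$ vanishing on $F$. $0^F \times (\mathbb P^1_{\mathbb R})^{E\setminus F}$ is the set of points of $(\mathbb P^1_{\mathbb R})^E$ whose coordinates in $F$ are $0$. Flats of $M$ are the zero sets $\{i: v_i=0\}$ of $v \in V$; a flat $F$ is acyclic if some $v \in V$ has $v_i = 0$ for $i \in F$ and $v_i > 0$ for $i \notin F$. *)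

theory Defs
  imports "HOL-Analysis.Analysis"
begin

text \<open>The real projective line P^1_R = R \<union> {\<infinity>} is modelled by the type real option:
  Some t is the real number t and None is the point at infinity.\<close>

type_synonym P1 = "real option"

text \<open>Stereographic identification of P^1_R with the unit circle in R^2; it is injective
  and onto the circle, so pulling back the Euclidean topology gives the analytic topology
  on P^1_R (the one-point compactification of R).\<close>

definition stereo :: "P1 \<Rightarrow> real \<times> real" where
  "stereo p = (case p of
      None \<Rightarrow> (0, 1)
    | Some t \<Rightarrow> (2 * t / (1 + t\<^sup>2), (t\<^sup>2 - 1) / (1 + t\<^sup>2)))"

definition P1_top :: "P1 topology" where
  "P1_top = pullback_topology UNIV stereo euclidean"

definition P1_pow_top :: "('e \<Rightarrow> P1) topology" where
  "P1_pow_top = product_topology (\<lambda>_. P1_top) UNIV"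

definition emb :: "(real ^ 'e) \<Rightarrow> ('e \<Rightarrow> P1)" where
  "emb v = (\<lambda>i. Some (v $ i))"

definition Ycl :: "(real ^ 'e) set \<Rightarrow> ('e \<Rightarrow> P1) set" where
  "Ycl W = P1_pow_top closure_of (emb ` (W \<inter> {v. \<forall>i. 0 \<le> v $ i}))"

text \<open>Flats of the oriented matroid of V are zero sets of vectors of V.\<close>

definition zero_set :: "(real ^ 'e) \<Rightarrow> 'e set" where
  "zero_set v = {i. v $ i = 0}"

definition is_flat :: "(real ^ 'e) set \<Rightarrow> 'e set \<Rightarrow> bool" where
  "is_flat V F \<longleftrightarrow> (\<exists>v\<in>V. F = zero_set v)"

definition acyclic_flat :: "(real ^ 'e) set \<Rightarrow> 'e set \<Rightarrow> bool" where
  "acyclic_flat V F \<longleftrightarrow> is_flat V F \<and>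
     (\<exists>v\<in>V. (\<forall>i\<in>F. v $ i = 0) \<and> (\<forall>i. i \<notin> F \<longrightarrow> v $ i > 0))"

end

theory Submission
  imports Defs
begin

lemma correction:
  fixes V :: "(real^'e::finite) set" and F :: "'e set" and u :: "real^'e"
  assumes V: "subspace V" and uV: "u \<in> V" and uF: "\<forall>i\<in>F. u$i=0" and upos: "\<forall>i. i\<notin>F \<longrightarrow> u$i>0"
  shows "\<exists>K>0. \<forall>v\<in>V. (\<forall>i. 0 \<le> v$i) \<longrightarrow> (\<exists>w\<in>V. (\<forall>i\<in>F. w$i=0) \<and> (\<forall>i. 0 \<le> w$i) \<and> (\<forall>i. \<bar>w$i - v$i\<bar> \<le> K * (\<Sum>j\<in>F. \<bar>v$j\<bar>)))"
proof -
  define T where "T = (\<lambda>v::real^'e. \<chi> i. if i\<in>F then v$i else 0)"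
  have lT: "linear T" unfolding T_def by (auto simp: linear_iff vec_eq_iff)
  obtain g where g: "range g \<subseteq> V" "linear g" "\<forall>y\<in>T`V. T (g y) = y"
    using real_vector.linear_exists_right_inverse_on[OF lT V] by blast
  obtain B where B: "\<forall>x. norm (g x) \<le> B * norm x" using linear_bounded[OF g(2)] by blast
  define Bp where "Bp = \<bar>B\<bar>"
  have Bp: "norm (g x) \<le> Bp * norm x" for x
    using B[rule_format, of x] unfolding Bp_def by (smt (verit) mult_right_mono norm_ge_zero)
  have Bp0: "Bp \<ge> 0" unfolding Bp_def by simp
  define m where "m = Min (insert 1 ((\<lambda>i. u$i) ` {i. i\<notin>F}))"
  have m0: "m > 0" unfolding m_def using upos by (subst Min_gr_iff) auto
  have mu: "m \<le> u$i" if "i\<notin>F" for i unfolding m_def using that by (intro Min_le) auto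
  define K where "K = 1 + Bp * (1 + norm u / m)"
  have K0: "K > 0" unfolding K_def using Bp0 m0 by (simp add: add_pos_nonneg)
  show ?thesis
  proof (intro exI[of _ K] conjI K0 ballI impI)
    fix v assume vV: "v \<in> V" and vnn: "\<forall>i. 0 \<le> v$i"
    define s where "s = (\<Sum>j\<in>F. \<bar>v$j\<bar>)"
    define z where "z = g (T v)"
    have zV: "z \<in> V" unfolding z_def using g(1) by auto
    have "T z = T v" unfolding z_def using g(3) vV by auto
    hence zF: "z$i = v$i" if "i\<in>F" for i using that unfolding T_def by (auto simp: vec_eq_iff) metis
    have "norm (T v) \<le> (\<Sum>i\<in>UNIV. \<bar>T v$i\<bar>)" by (rule norm_le_l1_cart)
    also have "\<dots> = (\<Sum>i\<in>UNIV. if i\<in>F then \<bar>v$i\<bar> else 0)" unfolding T_def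
      by (intro sum.cong) auto
    also have "\<dots> = s" unfolding s_def by (simp add: sum.If_cases)
    finally have nT: "norm (T v) \<le> s" .
    define nz where "nz = norm z"
    have nzs: "nz \<le> Bp * s" unfolding nz_def z_def using Bp[of "T v"] nT Bp0
      by (smt (verit) mult_left_mono)
    have nz0: "nz \<ge> 0" unfolding nz_def by simp
    define w where "w = v - z + (nz/m) *\<^sub>R u"
    show "\<exists>w\<in>V. (\<forall>i\<in>F. w$i=0) \<and> (\<forall>i. 0 \<le> w$i) \<and> (\<forall>i. \<bar>w$i - v$i\<bar> \<le> K * s)"
    proof (intro bexI[of _ w] conjI allI ballI)
      show "w \<in> V" unfolding w_def using vV zV uV V
        by (intro subspace_add subspace_diff subspace_mul) auto
      show "w$i = 0" if "i\<in>F" for i unfolding w_def using zF[OF that] uF that by simp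
      have zi: "\<bar>z$i\<bar> \<le> nz" for i unfolding nz_def by (rule component_le_norm_cart)
      have cu: "nz \<le> (nz/m) * u$i" if "i\<notin>F" for i
      proof -
        have "nz = (nz/m) * m" using m0 by simp
        also have "\<dots> \<le> (nz/m) * u$i" using mu[OF that] m0 nz0 by (intro mult_left_mono) auto
        finally show ?thesis .
      qed
      show "0 \<le> w$i" for i
      proof (cases "i\<in>F")
        case True thus ?thesis using zF[OF True] uF by (simp add: w_def)
      next
        case False thus ?thesis using cu[OF False] zi[of i] vnn[rule_format, of i] by (simp add: w_def)
      qed
      show "\<bar>w$i - v$i\<bar> \<le> K * s" for i
      proof -
        have ui: "\<bar>u$i\<bar> \<le> norm u" by (rule component_le_norm_cart)
        have "\<bar>w$i - v$i\<bar> = \<bar>- z$i + (nz/m) * u$i\<bar>" by (simp add: w_def)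
        also have "\<dots> \<le> \<bar>z$i\<bar> + (nz/m) * \<bar>u$i\<bar>" proof -
          have "\<bar>(nz/m) * u$i\<bar> = (nz/m) * \<bar>u$i\<bar>" using m0 nz0 by (simp add: abs_mult)
          thus ?thesis using abs_triangle_ineq[of "- z$i" "(nz/m) * u$i"] by simp
        qed
        also have "\<dots> \<le> nz + (nz/m) * norm u" using zi[of i] ui m0 nz0
          by (intro add_mono mult_left_mono) auto
        also have "\<dots> = nz * (1 + norm u / m)" by (simp add: algebra_simps)
        also have "\<dots> \<le> (Bp * s) * (1 + norm u / m)" using nzs m0
          by (intro mult_right_mono) auto
        also have "\<dots> \<le> K * s" unfolding K_def using Bp0 m0
          by (simp add: algebra_simps s_def sum_nonneg)
        finally show ?thesis .
      qed
    qed
  qed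
qed



lemma stereo_dist_sq:
  "(dist (stereo (Some a)) (stereo (Some b)))\<^sup>2 = 4 * (a-b)\<^sup>2 / ((1+a\<^sup>2)*(1+b\<^sup>2))"
proof -
  have pa: "1 + a\<^sup>2 > 0" "1 + b\<^sup>2 > 0" by (auto simp: add_pos_nonneg)
  have "(dist (stereo (Some a)) (stereo (Some b)))\<^sup>2 =
     (2*a/(1+a\<^sup>2) - 2*b/(1+b\<^sup>2))\<^sup>2 + ((a\<^sup>2-1)/(1+a\<^sup>2) - (b\<^sup>2-1)/(1+b\<^sup>2))\<^sup>2"
    by (simp add: stereo_def dist_Pair_Pair dist_real_def)
  also have "\<dots> = ((2*a*(1+b\<^sup>2) - 2*b*(1+a\<^sup>2))/((1+a\<^sup>2)*(1+b\<^sup>2)))\<^sup>2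
      + (((a\<^sup>2-1)*(1+b\<^sup>2) - (b\<^sup>2-1)*(1+a\<^sup>2))/((1+a\<^sup>2)*(1+b\<^sup>2)))\<^sup>2"
    using pa by (simp add: diff_frac_eq)
  also have "\<dots> = ((2*a*(1+b\<^sup>2) - 2*b*(1+a\<^sup>2))\<^sup>2 + ((a\<^sup>2-1)*(1+b\<^sup>2) - (b\<^sup>2-1)*(1+a\<^sup>2))\<^sup>2)
      / ((1+a\<^sup>2)*(1+b\<^sup>2))\<^sup>2"
    by (simp add: power_divide add_divide_distrib)
  also have "(2*a*(1+b\<^sup>2) - 2*b*(1+a\<^sup>2))\<^sup>2 + ((a\<^sup>2-1)*(1+b\<^sup>2) - (b\<^sup>2-1)*(1+a\<^sup>2))\<^sup>2
      = (4 * (a-b)\<^sup>2) * ((1+a\<^sup>2)*(1+b\<^sup>2))"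
    by (simp add: power2_eq_square algebra_simps)
  also have "(4 * (a-b)\<^sup>2) * ((1+a\<^sup>2)*(1+b\<^sup>2)) / ((1+a\<^sup>2)*(1+b\<^sup>2))\<^sup>2
      = 4 * (a-b)\<^sup>2 / ((1+a\<^sup>2)*(1+b\<^sup>2))"
    using pa by (simp add: power2_eq_square)
  finally show ?thesis .
qed

lemma stereo_lip: "dist (stereo (Some a)) (stereo (Some b)) \<le> 2 * \<bar>a-b\<bar>"
proof -
  have pa: "1 + a\<^sup>2 \<ge> 1" "1 + b\<^sup>2 \<ge> 1" by auto
  have "1 \<le> (1+a\<^sup>2)*(1+b\<^sup>2)" using pa by (metis mult_mono' mult_1 zero_le_one)
  hence "4 * (a-b)\<^sup>2 / ((1+a\<^sup>2)*(1+b\<^sup>2)) \<le> 4 * (a-b)\<^sup>2 / 1"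
    by (intro divide_left_mono) auto
  hence "(dist (stereo (Some a)) (stereo (Some b)))\<^sup>2 \<le> (2 * \<bar>a-b\<bar>)\<^sup>2"
    by (simp add: stereo_dist_sq power_mult_distrib)
  thus ?thesis by (rule power2_le_imp_le) simp
qed



lemma stereo_small:
  assumes "dist (stereo (Some v)) (stereo (Some 0)) < d" "d \<le> 1"
  shows "\<bar>v\<bar> < d"
proof -
  have d0: "d > 0" using assms(1) by (meson dist_not_less_zero less_le_trans not_le) 
  have "(dist (stereo (Some v)) (stereo (Some 0)))\<^sup>2 < d\<^sup>2"
    using assms(1) by (intro power_strict_mono) auto
  hence "4 * v\<^sup>2 / (1+v\<^sup>2) < d\<^sup>2" by (simp add: stereo_dist_sq)
  hence "4 * v\<^sup>2 < d\<^sup>2 * (1+v\<^sup>2)" by (simp add: divide_less_eq add_pos_nonneg)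
  moreover have "d\<^sup>2 \<le> 1" using assms d0 by (simp add: power_le_one)
  moreover have "d\<^sup>2 * v\<^sup>2 \<le> 1 * v\<^sup>2" using \<open>d\<^sup>2 \<le> 1\<close> by (intro mult_right_mono) auto
  ultimately have "v\<^sup>2 < d\<^sup>2" by (simp add: algebra_simps) (use zero_le_power2[of v] in linarith)
  hence "\<bar>v\<bar>\<^sup>2 < d\<^sup>2" by simp
  from power2_less_imp_less[OF this] d0 show ?thesis by simp
qed

lemma stereo_inj0: "stereo q = stereo (Some 0) \<Longrightarrow> q = Some 0"
proof (cases q)
  case None
  assume "stereo q = stereo (Some 0)"
  thus ?thesis using None by (simp add: stereo_def)
next
  case (Some t)
  assume h: "stereo q = stereo (Some 0)"
  have pos: "1 + t\<^sup>2 \<noteq> 0" by (metis add_pos_nonneg less_irrefl zero_le_power2 zero_less_one)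
  from h Some have "2 * t / (1 + t\<^sup>2) = 0" by (simp add: stereo_def)
  hence "t = 0" using pos by simp
  thus ?thesis using Some by simp
qed



lemma topspace_P1_pow: "topspace P1_pow_top = UNIV"
  by (simp add: P1_pow_top_def P1_top_def topspace_pullback_topology)

lemma closure_char:
  fixes S :: "('e::finite \<Rightarrow> P1) set"
  shows "p \<in> P1_pow_top closure_of S \<longleftrightarrow>
    (\<forall>e>0. \<exists>y\<in>S. \<forall>i. dist (stereo (y i)) (stereo (p i)) < e)"
proof
  assume p: "p \<in> P1_pow_top closure_of S"
  show "\<forall>e>0. \<exists>y\<in>S. \<forall>i. dist (stereo (y i)) (stereo (p i)) < e"
  proof (intro allI impI)
    fix e :: real assume e: "e > 0"
    define N where "N = {y. \<forall>i. dist (stereo (y i)) (stereo (p i)) < e}"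
    have "openin P1_pow_top N"
      unfolding P1_pow_top_def openin_product_topology_alt
    proof (intro ballI)
      fix x assume "x \<in> N"
      have 1: "\<forall>i\<in>UNIV. openin P1_top (stereo -` ball (stereo (p i)) e)"
        unfolding P1_top_def openin_pullback_topology by auto
      have 2: "x \<in> Pi\<^sub>E UNIV (\<lambda>i. stereo -` ball (stereo (p i)) e)"
        using \<open>x \<in> N\<close> by (auto simp: N_def dist_commute)
      have 3: "Pi\<^sub>E UNIV (\<lambda>i. stereo -` ball (stereo (p i)) e) \<subseteq> N"
        unfolding N_def by (auto simp: dist_commute PiE_iff)
      show "\<exists>U. finite {i \<in> UNIV. U i \<noteq> topspace P1_top} \<and> (\<forall>i\<in>UNIV. openin P1_top (U i)) \<and>
          x \<in> Pi\<^sub>E UNIV U \<and> Pi\<^sub>E UNIV U \<subseteq> N"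
        using 1 2 3 by (intro exI[of _ "\<lambda>i. stereo -` ball (stereo (p i)) e"]) auto
    qed
    moreover have "p \<in> N" using e by (simp add: N_def)
    ultimately obtain y where "y \<in> S" "y \<in> N" using p unfolding in_closure_of by blast
    thus "\<exists>y\<in>S. \<forall>i. dist (stereo (y i)) (stereo (p i)) < e" by (auto simp: N_def)
  qed
next
  assume H: "\<forall>e>0. \<exists>y\<in>S. \<forall>i. dist (stereo (y i)) (stereo (p i)) < e"
  show "p \<in> P1_pow_top closure_of S"
    unfolding in_closure_of topspace_P1_pow
  proof (intro conjI allI impI UNIV_I)
    fix T assume T: "p \<in> T \<and> openin P1_pow_top T"
    have "openin (product_topology (\<lambda>_. P1_top) UNIV) T" using T by (simp add: P1_pow_top_def)
    hence "\<forall>x\<in>T. \<exists>U. finite {i \<in> UNIV. U i \<noteq> topspace P1_top} \<and> (\<forall>i\<in>UNIV. openin P1_top (U i)) \<and>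
          x \<in> Pi\<^sub>E UNIV U \<and> Pi\<^sub>E UNIV U \<subseteq> T" by (simp only: openin_product_topology_alt)
    moreover have "p \<in> T" using T by simp
    ultimately have "\<exists>U. finite {i \<in> UNIV. U i \<noteq> topspace P1_top} \<and> (\<forall>i\<in>UNIV. openin P1_top (U i)) \<and>
          p \<in> Pi\<^sub>E UNIV U \<and> Pi\<^sub>E UNIV U \<subseteq> T" by (rule bspec)
    then obtain U where U: "\<forall>i\<in>UNIV. openin P1_top (U i)" "p \<in> Pi\<^sub>E UNIV U" "Pi\<^sub>E UNIV U \<subseteq> T"
      by (elim exE conjE) (intro that)
    have "\<exists>e>0. \<forall>r. dist (stereo r) (stereo (p i)) < e \<longrightarrow> r \<in> U i" for i
    proof -
      obtain Ob where Ob: "open Ob" "U i = stereo -` Ob" using U(1)[rule_format, of i]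
        unfolding P1_top_def openin_pullback_topology by auto
      have "stereo (p i) \<in> Ob" using U(2) Ob by auto
      then obtain e where e: "e > 0" "ball (stereo (p i)) e \<subseteq> Ob" using Ob(1) open_contains_ball by blast
      have "r \<in> U i" if "dist (stereo r) (stereo (p i)) < e" for r
      proof -
        have "stereo r \<in> ball (stereo (p i)) e" using that by (simp add: dist_commute)
        thus ?thesis using e(2) Ob(2) by blast
      qed
      then show ?thesis using e(1) by blast
    qed
    then obtain e where e: "\<And>i. e i > 0" "\<And>i r. dist (stereo r) (stereo (p i)) < e i \<Longrightarrow> r \<in> U i"
      by metis
    define e0 where "e0 = Min (range e)"
    have e0: "e0 > 0" unfolding e0_def using e(1) by (subst Min_gr_iff) auto
    have e0i: "e0 \<le> e i" for i unfolding e0_def by (intro Min_le) auto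
    obtain y where y: "y \<in> S" "\<forall>i. dist (stereo (y i)) (stereo (p i)) < e0" using H e0 by blast
    have "y i \<in> U i" for i using e(2)[of "y i" i] y(2) e0i[of i] by (meson less_le_trans)
    hence "y \<in> Pi\<^sub>E UNIV U" by (simp add: PiE_iff)
    thus "\<exists>y. y \<in> S \<and> y \<in> T" using y U(3) by blast
  qed
qed


theorem corollary3p5:
  fixes V :: "(real ^ 'e::finite) set" and F :: "'e set"
  assumes "subspace V"
    and "acyclic_flat V F"
  shows "Ycl V \<inter> {p. \<forall>i\<in>F. p i = Some 0} = Ycl (V \<inter> {v. \<forall>i\<in>F. v $ i = 0})"
proof (rule equalityI)
  define W where "W = V \<inter> {v. \<forall>i\<in>F. v $ i = 0}"
  obtain u where u: "u \<in> V" "\<forall>i\<in>F. u$i = 0" "\<forall>i. i \<notin> F \<longrightarrow> u$i > 0"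
    using assms(2) unfolding acyclic_flat_def by blast
  obtain K where K: "K > 0" "\<forall>v\<in>V. (\<forall>i. 0 \<le> v$i) \<longrightarrow> (\<exists>w\<in>V. (\<forall>i\<in>F. w$i=0) \<and> (\<forall>i. 0 \<le> w$i) \<and> (\<forall>i. \<bar>w$i - v$i\<bar> \<le> K * (\<Sum>j\<in>F. \<bar>v$j\<bar>)))"
    using correction[OF assms(1) u(1) u(2) u(3)] by blast
  show "Ycl V \<inter> {p. \<forall>i\<in>F. p i = Some 0} \<subseteq> Ycl (V \<inter> {v. \<forall>i\<in>F. v $ i = 0})"
  proof
    fix p assume "p \<in> Ycl V \<inter> {p. \<forall>i\<in>F. p i = Some 0}"
    hence pV: "p \<in> Ycl V" and pF: "\<And>i. i \<in> F \<Longrightarrow> p i = Some 0" by auto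
    have HV: "\<forall>e>0. \<exists>y\<in>emb ` (V \<inter> {v. \<forall>i. 0 \<le> v $ i}). \<forall>i. dist (stereo (y i)) (stereo (p i)) < e"
      using pV unfolding Ycl_def closure_char .
    show "p \<in> Ycl (V \<inter> {v. \<forall>i\<in>F. v $ i = 0})"
      unfolding Ycl_def closure_char
    proof (intro allI impI)
      fix e :: real assume e: "e > 0"
      define c where "c = real (card F) + 1"
      have c: "c > 0" unfolding c_def by simp
      define d where "d = min 1 (e / (4 * K * c))"
      have d: "d > 0" "d \<le> 1" "2 * K * c * d \<le> e / 2" using e K(1) c
        by (auto simp: d_def field_simps min_def)
      define d' where "d' = min (e/2) d"
      have d': "d' > 0" using d e by (simp add: d'_def)
      obtain y where y: "y \<in> emb ` (V \<inter> {v. \<forall>i. 0 \<le> v $ i})"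
        "\<forall>i. dist (stereo (y i)) (stereo (p i)) < d'" using HV d' by blast
      then obtain v where v: "v \<in> V" "\<forall>i. 0 \<le> v $ i" "y = emb v" by auto
      have vi: "dist (stereo (Some (v$i))) (stereo (p i)) < d'" for i
        using y(2) v(3) by (simp add: emb_def)
      have vF: "\<bar>v$j\<bar> < d" if "j \<in> F" for j
        using stereo_small[of "v$j" d] vi[of j] pF[OF that] d(2) by (simp add: d'_def)
      have s: "(\<Sum>j\<in>F. \<bar>v$j\<bar>) \<le> c * d"
      proof -
        have "(\<Sum>j\<in>F. \<bar>v$j\<bar>) \<le> (\<Sum>j\<in>F. d)" using vF by (intro sum_mono) (simp add: less_imp_le)
        also have "\<dots> = real (card F) * d" by simp
        also have "\<dots> \<le> c * d" using d by (simp add: c_def)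
        finally show ?thesis .
      qed
      obtain w where w: "w \<in> V" "\<forall>i\<in>F. w$i=0" "\<forall>i. 0 \<le> w$i"
        "\<forall>i. \<bar>w$i - v$i\<bar> \<le> K * (\<Sum>j\<in>F. \<bar>v$j\<bar>)"
        using K(2) v(1,2) by blast
      show "\<exists>y\<in>emb ` ((V \<inter> {v. \<forall>i\<in>F. v $ i = 0}) \<inter> {v. \<forall>i. 0 \<le> v $ i}).
              \<forall>i. dist (stereo (y i)) (stereo (p i)) < e"
      proof (intro bexI[of _ "emb w"] allI)
        show "emb w \<in> emb ` ((V \<inter> {v. \<forall>i\<in>F. v $ i = 0}) \<inter> {v. \<forall>i. 0 \<le> v $ i})"
          using w by auto
        fix i
        have "dist (stereo (emb w i)) (stereo (p i)) \<le>
              dist (stereo (Some (w$i))) (stereo (Some (v$i))) + dist (stereo (Some (v$i))) (stereo (p i))"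
          unfolding emb_def by (rule dist_triangle)
        also have "\<dots> < 2 * \<bar>w$i - v$i\<bar> + d'"
          using stereo_lip[of "w$i" "v$i"] vi[of i] by linarith
        also have "2 * \<bar>w$i - v$i\<bar> \<le> 2 * K * c * d"
        proof -
          have "\<bar>w$i - v$i\<bar> \<le> K * (c * d)"
            using w(4)[rule_format, of i] s K(1) by (meson mult_left_mono less_imp_le order_trans)
          thus ?thesis by (simp add: algebra_simps)
        qed
        hence "2 * \<bar>w$i - v$i\<bar> + d' \<le> e"
          using d(3) min.cobounded1[of "e/2" d] unfolding d'_def by linarith
        finally show "dist (stereo (emb w i)) (stereo (p i)) < e" by simp
      qed
    qed
  qed
  show "Ycl (V \<inter> {v. \<forall>i\<in>F. v $ i = 0}) \<subseteq> Ycl V \<inter> {p. \<forall>i\<in>F. p i = Some 0}"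
  proof
    fix p assume pW: "p \<in> Ycl (V \<inter> {v. \<forall>i\<in>F. v $ i = 0})"
    have "p \<in> Ycl V" using pW unfolding Ycl_def
      by (rule closure_of_mono[THEN subsetD, rotated]) auto
    moreover have "p i = Some 0" if iF: "i \<in> F" for i
    proof (rule ccontr)
      assume ne: "p i \<noteq> Some 0"
      define e where "e = dist (stereo (Some 0)) (stereo (p i))"
      have e: "e > 0" unfolding e_def using ne stereo_inj0[of "p i"] by auto
      obtain y where y: "y \<in> emb ` ((V \<inter> {v. \<forall>i\<in>F. v $ i = 0}) \<inter> {v. \<forall>i. 0 \<le> v $ i})"
        "\<forall>i. dist (stereo (y i)) (stereo (p i)) < e"
        using pW e unfolding Ycl_def closure_char by blast
      then obtain w where "y = emb w" "w$i = 0" using iF by auto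
      thus False using y(2)[rule_format, of i] by (simp add: emb_def e_def)
    qed
    ultimately show "p \<in> Ycl V \<inter> {p. \<forall>i\<in>F. p i = Some 0}" by auto
  qed
qed

end
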